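(* Let $r\ge 3$ be an integer, let $\varphi$ be an instance of Exact $r$-SAT, and let $G(\varphi)$ be the graph constructed from $\varphi$ as described in the context. If $\varphi$ is satisfiable, then $\mathrm{wcol}_r(G(\varphi)) \leq 2r-1$.
   Context: Exact $r$-SAT: given a CNF formula $\varphi$ with clauses $c_1,\dots,c_m$ over variables $x_1,\dots,x_n$ such that each clause contains exactly $r$ different variables, decide whether $\varphi$ is satisfiable. An $\ell$-subdivided edge between $a$ and $b$ is an induced path with $\ell$ internal vertices (subdivision vertices) joining $a$ and $b$, whose internal vertices have no other neighbors. Construction of $G(\varphi)$: for each clause $c_i$ create $2r$ vertices $u_i^1,\dots,u_i^{2r}$. For each variable $x_j$ create two vertices $v_j,v'_j$ (for the literals $x_j$ and $\overline{x}_j$) joined by an edge. For each clause $c_i$ containing literal $x_j$, add two $(r-2)$-subdivided edges from $v_j$ to each of $u_i^1,\dots,u_i^{2r}$; for each clause $c_i$ containing $\overline{x}_j$, add two $(r-2)$-subdivided edges from $v'_j$ to each of $u_i^1,\dots,u_i^{2r}$. Weak coloring numbers: for a graph $G=(V,E)$ and a total order $\sigma$ of $V$, a vertex $v\neq u$ is weakly $r$-reachable from $u$ if $u <_\sigma v$ and there is a $u$–$v$ path $P$ of length at most $r$ all of whose vertices other than $u,v$ precede $v$ in $\sigma$; $\mathrm{wreach}_r(u,G_\sigma)$ is the set of such $v$, and $\mathrm{wcol}_r(G)=\min_\sigma\max_u|\mathrm{wreach}_r(u,G_\sigma)|$ over all total orders $\sigma$ of $V$. *)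

theory Defs
  imports Main
begin

text \<open>A literal is a pair (j, b): variable index j with polarity b
  (b = True for x_j, b = False for the negation of x_j).\<close>

type_synonym literal = "nat \<times> bool"
type_synonym clause = "literal set"

definition exact_rSAT_instance :: "nat \<Rightarrow> nat \<Rightarrow> clause list \<Rightarrow> bool" where
  "exact_rSAT_instance r n cls \<longleftrightarrow>
     (\<forall>C \<in> set cls. card C = r \<and> card (fst ` C) = r \<and> fst ` C \<subseteq> {..<n})"

definition satisfiable :: "clause list \<Rightarrow> bool" where
  "satisfiable cls \<longleftrightarrow> (\<exists>a :: nat \<Rightarrow> bool. \<forall>C \<in> set cls. \<exists>(j, b) \<in> C. a j = b)"

text \<open>Vertices: Ucl i k is u_i^(k+1) (k < 2r); Vlit j True is v_j, Vlit j False is v'_j;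
  Ssub i j b k t p is the p-th subdivision vertex (1 <= p <= r-2) of the t-th (t < 2)
  subdivided edge between the literal vertex of (j,b) and u_i^(k+1), where (j,b) is a
  literal of clause c_i.\<close>

datatype gvert = Ucl nat nat | Vlit nat bool | Ssub nat nat bool nat nat nat

definition Gphi_verts :: "nat \<Rightarrow> nat \<Rightarrow> clause list \<Rightarrow> gvert set" where
  "Gphi_verts r n cls =
     {Ucl i k | i k. i < length cls \<and> k < 2 * r}
   \<union> {Vlit j b | j b. j < n}
   \<union> {Ssub i j b k t p | i j b k t p. i < length cls \<and> (j, b) \<in> cls ! i \<and> k < 2 * r
        \<and> t < 2 \<and> 1 \<le> p \<and> p \<le> r - 2}"

definition Gphi_edge :: "nat \<Rightarrow> nat \<Rightarrow> clause list \<Rightarrow> gvert \<Rightarrow> gvert \<Rightarrow> bool" where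
  "Gphi_edge r n cls x y \<longleftrightarrow>
     (\<exists>j < n. {x, y} = {Vlit j True, Vlit j False})
   \<or> (\<exists>i < length cls. \<exists>j b. (j, b) \<in> cls ! i \<and> (\<exists>k < 2 * r. \<exists>t < 2.
        {x, y} = {Vlit j b, Ssub i j b k t 1}
      \<or> {x, y} = {Ssub i j b k t (r - 2), Ucl i k}
      \<or> (\<exists>p. 1 \<le> p \<and> p < r - 2 \<and> {x, y} = {Ssub i j b k t p, Ssub i j b k t (p + 1)})))"

text \<open>A graph is given by a vertex set V and a symmetric adjacency relation E.
  A total order sigma of V is represented by an injective rank function on V:
  u <_sigma v iff ord u < ord v.\<close>

definition is_path :: "'a set \<Rightarrow> ('a \<Rightarrow> 'a \<Rightarrow> bool) \<Rightarrow> 'a list \<Rightarrow> bool" where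
  "is_path V E P \<longleftrightarrow> P \<noteq> [] \<and> distinct P \<and> set P \<subseteq> V \<and>
     (\<forall>i. Suc i < length P \<longrightarrow> E (P ! i) (P ! Suc i))"

definition wreach :: "nat \<Rightarrow> 'a set \<Rightarrow> ('a \<Rightarrow> 'a \<Rightarrow> bool) \<Rightarrow> ('a \<Rightarrow> nat) \<Rightarrow> 'a \<Rightarrow> 'a set" where
  "wreach r V E ord u = {v \<in> V. v \<noteq> u \<and> ord u < ord v \<and>
     (\<exists>P. is_path V E P \<and> hd P = u \<and> last P = v \<and> length P - 1 \<le> r \<and>
          (\<forall>w \<in> set P. w \<noteq> u \<and> w \<noteq> v \<longrightarrow> ord w < ord v))}"

definition wcol :: "nat \<Rightarrow> 'a set \<Rightarrow> ('a \<Rightarrow> 'a \<Rightarrow> bool) \<Rightarrow> nat" where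
  "wcol r V E = (LEAST k. \<exists>ord :: 'a \<Rightarrow> nat. inj_on ord V \<and>
                     (\<forall>u \<in> V. card (wreach r V E ord u) \<le> k))"

end

theory Submission
  imports Defs "HOL-Library.Countable"
begin

instance gvert :: countable by countable_datatype

definition dv :: "nat \<Rightarrow> clause list \<Rightarrow> nat \<Rightarrow> gvert \<Rightarrow> int" where
 "dv r cls j x = (case x of Vlit j' b \<Rightarrow> if j' = j then 0 else 2*int r - 2
   | Ssub i j' b k t p \<Rightarrow> if j' = j then int p else if j \<in> fst ` (cls!i) then 2*int r - 2 - int p else 2*int r - 2
   | Ucl i k \<Rightarrow> if j \<in> fst ` (cls!i) then int r - 1 else 2*int r - 2)"

definition gk :: "nat \<Rightarrow> clause list \<Rightarrow> nat \<Rightarrow> nat \<Rightarrow> gvert \<Rightarrow> int" where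
 "gk r cls i k x = (case x of Ucl i' k' \<Rightarrow> if i' = i \<and> k' = k then 0 else int r + 1
   | Ssub i' j b k' t p \<Rightarrow> if i' = i \<and> k' = k then int r - 1 - int p else if (j,b) \<in> cls!i then int r else int r + 1
   | Vlit j b \<Rightarrow> if (j,b) \<in> cls!i then int r - 1 else if (j, \<not>b) \<in> cls!i then int r else int r + 1)"

lemma edge_sym: "Gphi_edge r n cls x y = Gphi_edge r n cls y x"
  unfolding Gphi_edge_def by (simp add: insert_commute)

lemma dv_lip: assumes "r \<ge> 3" "Gphi_edge r n cls x y" shows "\<bar>dv r cls j x - dv r cls j y\<bar> \<le> 1"
  using assms unfolding Gphi_edge_def dv_def
  by (auto simp: doubleton_eq_iff of_nat_diff image_iff split: if_splits; force)

lemma gk_lip: assumes "r \<ge> 3" "Gphi_edge r n cls x y" shows "\<bar>gk r cls i k x - gk r cls i k y\<bar> \<le> 1"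
  using assms unfolding Gphi_edge_def gk_def
  by (auto simp: doubleton_eq_iff of_nat_diff split: if_splits)


definition is_ss :: "gvert \<Rightarrow> bool" where
  "is_ss x = (case x of Ssub _ _ _ _ _ _ \<Rightarrow> True | _ \<Rightarrow> False)"

lemma nb_Vlit: assumes "Gphi_edge r n cls (Vlit j b) y"
  shows "y = Vlit j (\<not>b) \<or> (\<exists>i k t. y = Ssub i j b k t 1 \<and> (j,b) \<in> cls!i)"
  using assms unfolding Gphi_edge_def by (auto simp: doubleton_eq_iff)

lemma nb_Ssub: assumes "Gphi_edge r n cls (Ssub i j b k t p) y" "\<not> is_ss y"
  shows "y = Vlit j b \<or> y = Ucl i k"
  using assms unfolding Gphi_edge_def is_ss_def by (auto simp: doubleton_eq_iff)

lemma nb_Ssub2: assumes "Gphi_edge r n cls (Ssub i j b k t p) y" "is_ss y"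
  shows "\<exists>p'. y = Ssub i j b k t p'"
  using assms unfolding Gphi_edge_def is_ss_def by (auto simp: doubleton_eq_iff)

lemma lip_walk:
  assumes "\<And>x y. E x y \<Longrightarrow> \<bar>f x - f y\<bar> \<le> (1::int)"
    and "\<forall>i<m. E (P!i) (P!Suc i)" and "a \<le> b" and "b \<le> m"
  shows "\<bar>f (P!b) - f (P!a)\<bar> \<le> int (b - a)"
  using assms(3,4)
proof (induction b)
  case 0 then show ?case by simp
next
  case (Suc b)
  show ?case
  proof (cases "a = Suc b")
    case True then show ?thesis by simp
  next
    case False
    then have "a \<le> b" using Suc by simp
    with Suc have ih: "\<bar>f (P!b) - f (P!a)\<bar> \<le> int (b - a)" by simp
    have "\<bar>f (P!b) - f (P!Suc b)\<bar> \<le> 1" using assms(1,2) Suc by simp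
    then show ?thesis using ih \<open>a \<le> b\<close> by linarith
  qed
qed

lemma seg_walk:
  assumes "\<forall>i<m. Gphi_edge r n cls (P!i) (P!Suc i)" "P!0 = Ssub i j b k t p"
    "\<forall>q'<q. is_ss (P!q')" "q \<le> Suc m" "c < q"
  shows "\<exists>p'. P!c = Ssub i j b k t p'"
  using assms(5)
proof (induction c)
  case 0 then show ?case using assms by auto
next
  case (Suc c)
  then obtain p' where "P!c = Ssub i j b k t p'" by auto
  moreover have "Gphi_edge r n cls (P!c) (P!Suc c)" using assms Suc by auto
  moreover have "is_ss (P!Suc c)" using assms Suc by auto
  ultimately show ?case using nb_Ssub2 by metis
qed

definition lev :: "(nat \<Rightarrow> bool) \<Rightarrow> gvert \<Rightarrow> nat" where
  "lev a x = (case x of Ssub _ _ _ _ _ _ \<Rightarrow> 0 | Ucl _ _ \<Rightarrow> 1 | Vlit j b \<Rightarrow> if a j = b then 3 else 2)"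

definition ordf :: "(nat \<Rightarrow> bool) \<Rightarrow> nat \<Rightarrow> gvert \<Rightarrow> nat" where
  "ordf a B x = lev a x * B + to_nat x"

lemma ordf_lev: assumes "to_nat x < B" "to_nat y < B" "ordf a B x < ordf a B y"
  shows "lev a x \<le> lev a y"
proof (rule ccontr)
  assume "\<not> ?thesis"
  then have "(lev a y + 1) * B \<le> lev a x * B" by (intro mult_right_mono) auto
  then show False using assms unfolding ordf_def by simp
qed

lemma ordf_inj: assumes "to_nat x < B" "to_nat y < B" "ordf a B x = ordf a B y"
  shows "x = y"
proof -
  have "to_nat x = (lev a x * B + to_nat x) mod B" using assms(1) by simp
  also have "\<dots> = (lev a y * B + to_nat y) mod B" using assms(3) unfolding ordf_def by simp
  also have "\<dots> = to_nat y" using assms(2) by simp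
  finally have "to_nat x = to_nat y" .
  then show ?thesis by simp
qed

lemma wreach_E:
  assumes "v \<in> wreach r V E ord u"
  obtains P m where "length P = Suc m" "m \<le> r" "P!0 = u" "P!m = v"
    "\<forall>i<m. E (P!i) (P!Suc i)" "\<forall>i\<le>m. P!i \<in> V"
    "\<forall>i\<le>m. P!i \<noteq> u \<and> P!i \<noteq> v \<longrightarrow> ord (P!i) < ord v"
    "v \<in> V" "v \<noteq> u" "ord u < ord v"
proof -
  from assms obtain P where P: "is_path V E P" "hd P = u" "last P = v" "length P - 1 \<le> r"
     "\<forall>w \<in> set P. w \<noteq> u \<and> w \<noteq> v \<longrightarrow> ord w < ord v" and v: "v \<in> V" "v \<noteq> u" "ord u < ord v"
    unfolding wreach_def by blast
  have ne: "P \<noteq> []" using P(1) unfolding is_path_def by simp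
  define m where "m = length P - 1"
  have l: "length P = Suc m" using ne m_def by (cases P) auto
  show ?thesis
  proof (rule that[of P m])
    show "P!0 = u" using P(2) ne by (simp add: hd_conv_nth)
    show "P!m = v" using P(3) ne m_def by (simp add: last_conv_nth)
    show "\<forall>i<m. E (P!i) (P!Suc i)" using P(1) l unfolding is_path_def by auto
    show "\<forall>i\<le>m. P!i \<in> V" using P(1) l unfolding is_path_def by (auto simp: subset_iff)
    show "\<forall>i\<le>m. P!i \<noteq> u \<and> P!i \<noteq> v \<longrightarrow> ord (P!i) < ord v" using P(5) l by auto
  qed (use l P m_def v in auto)
qed


context
  fixes r n :: nat and cls :: "clause list" and a :: "nat \<Rightarrow> bool" and B :: nat
  assumes r3: "r \<ge> 3" and ex: "exact_rSAT_instance r n cls"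
    and sat: "\<forall>C \<in> set cls. \<exists>(j,b)\<in>C. a j = b"
    and Bb: "\<forall>x \<in> Gphi_verts r n cls. to_nat x < B"
begin

lemma lev_le: "x \<in> Gphi_verts r n cls \<Longrightarrow> y \<in> Gphi_verts r n cls \<Longrightarrow> ordf a B x < ordf a B y
  \<Longrightarrow> lev a x \<le> lev a y"
  using ordf_lev Bb by blast

lemma wr_Vlit: "wreach r (Gphi_verts r n cls) (Gphi_edge r n cls) (ordf a B) (Vlit j b) \<subseteq> {Vlit j (\<not>b)}"
proof
  fix v assume "v \<in> wreach r (Gphi_verts r n cls) (Gphi_edge r n cls) (ordf a B) (Vlit j b)"
  then obtain P m where P: "length P = Suc m" "m \<le> r" "P!0 = Vlit j b" "P!m = v"
    "\<forall>i<m. Gphi_edge r n cls (P!i) (P!Suc i)" "\<forall>i\<le>m. P!i \<in> Gphi_verts r n cls"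
    "v \<in> Gphi_verts r n cls" "v \<noteq> Vlit j b" "ordf a B (Vlit j b) < ordf a B v"
    by (rule wreach_E) blast
  have "lev a (Vlit j b) \<le> lev a v" using lev_le P by force
  then obtain j' b' where v: "v = Vlit j' b'" by (cases v) (auto simp: lev_def split: if_splits)
  have l: "\<bar>dv r cls j (P!m) - dv r cls j (P!0)\<bar> \<le> int (m - 0)"
    by (rule lip_walk[where E="Gphi_edge r n cls" and m=m]) (use dv_lip r3 P in auto)
  have "j' = j"
  proof (rule ccontr)
    assume "j' \<noteq> j"
    then have "dv r cls j (P!m) = 2 * int r - 2" "dv r cls j (P!0) = 0" using v P by (auto simp: dv_def)
    then show False using l P r3 by simp
  qed
  then have "v = Vlit j b'" using v by simp
  moreover have "b' \<noteq> b" using calculation P(8) by auto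
  ultimately show "v \<in> {Vlit j (\<not>b)}" by auto
qed

lemma wr_Ucl: assumes "i < length cls"
  shows "wreach r (Gphi_verts r n cls) (Gphi_edge r n cls) (ordf a B) (Ucl i k) \<subseteq>
    (\<lambda>(j,b). Vlit j b) ` (cls!i) \<union> (\<lambda>(j,b). Vlit j (\<not>b)) ` {x\<in>cls!i. a (fst x) \<noteq> snd x}"
proof
  fix v assume "v \<in> wreach r (Gphi_verts r n cls) (Gphi_edge r n cls) (ordf a B) (Ucl i k)"
  then obtain P m where P: "length P = Suc m" "m \<le> r" "P!0 = Ucl i k" "P!m = v"
    "\<forall>i<m. Gphi_edge r n cls (P!i) (P!Suc i)" "\<forall>i\<le>m. P!i \<in> Gphi_verts r n cls"
    "\<forall>c\<le>m. P!c \<noteq> Ucl i k \<and> P!c \<noteq> v \<longrightarrow> ordf a B (P!c) < ordf a B v"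
    "v \<in> Gphi_verts r n cls" "v \<noteq> Ucl i k" "ordf a B (Ucl i k) < ordf a B v"
    by (rule wreach_E)
  have lip: "\<bar>gk r cls i k (P!c) - gk r cls i k (P!0)\<bar> \<le> int (c - 0)" if "c \<le> m" for c
    by (rule lip_walk[where E="Gphi_edge r n cls" and m=m]) (use gk_lip r3 P that in auto)
  have g0: "gk r cls i k (P!0) = 0" using P by (simp add: gk_def)
  have uV: "Ucl i k \<in> Gphi_verts r n cls" using P(6) P(3) by (metis le0)
  have lv: "lev a (Ucl i k) \<le> lev a v" using lev_le[OF uV P(8) P(10)] .
  have gv: "gk r cls i k v \<le> int m" using lip[of m] g0 P by simp
  have "\<exists>j b. v = Vlit j b"
  proof (cases v)
    case (Ucl i' k')
    then have "gk r cls i k v = int r + 1" using P(9) by (auto simp: gk_def)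
    then show ?thesis using gv P(2) by simp
  next
    case (Vlit j b) then show ?thesis by blast
  next
    case (Ssub i' j b k' t p) then show ?thesis using lv by (simp add: lev_def)
  qed
  then obtain j b where v: "v = Vlit j b" by blast
  show "v \<in> (\<lambda>(j,b). Vlit j b) ` (cls!i) \<union> (\<lambda>(j,b). Vlit j (\<not>b)) ` {x\<in>cls!i. a (fst x) \<noteq> snd x}"
  proof (cases "(j,b) \<in> cls!i")
    case True
    have "v = (\<lambda>(j,b). Vlit j b) (j,b)" using v by simp
    then show ?thesis using True by (intro UnI1) (erule ssubst, rule imageI)
  next
    case False
    have gv2: "gk r cls i k v = (if (j, \<not>b) \<in> cls!i then int r else int r + 1)"
      using False v by (simp add: gk_def)
    then have nb: "(j,\<not>b) \<in> cls!i" using gv P(2) by (cases "(j,\<not>b) \<in> cls!i") simp_all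
    then have mr: "m = r" using gv gv2 P(2) by simp
    define w where "w = P!(m-1)"
    have mm: "m - 1 < m" "Suc (m-1) = m" using mr r3 by auto
    have "Gphi_edge r n cls (P!(m-1)) (P!Suc (m-1))" using P(5) mm(1) by blast
    then have e: "Gphi_edge r n cls v w" using mm(2) P(4) w_def edge_sym by metis
    have gw: "gk r cls i k w \<le> int (m - 1)" using lip[of "m-1"] g0 w_def by simp
    have "w = Vlit j (\<not>b)"
    proof -
      have "\<not> (\<exists>i' k' t. w = Ssub i' j b k' t 1 \<and> (j,b) \<in> cls!i')"
      proof
        assume "\<exists>i' k' t. w = Ssub i' j b k' t 1 \<and> (j,b) \<in> cls!i'"
        then obtain i' k' t where w: "w = Ssub i' j b k' t 1" "(j,b) \<in> cls!i'" by blast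
        have "\<not> (i' = i \<and> k' = k)" using w(2) False by blast
        then have "gk r cls i k w = int r + 1" using w(1) False by (simp add: gk_def)
        then show False using gw mr r3 by simp
      qed
      then show ?thesis using nb_Vlit[OF e[unfolded v]] by blast
    qed
    then have wn: "w \<noteq> Ucl i k" "w \<noteq> v" using v by auto
    have "ordf a B w < ordf a B v" using P(7) wn unfolding w_def by simp
    moreover have "w \<in> Gphi_verts r n cls" using P(6) w_def by simp
    ultimately have "lev a w \<le> lev a v" using lev_le P(8) by blast
    then have "a j = b" using \<open>w = Vlit j (\<not>b)\<close> v by (auto simp: lev_def split: if_splits)
    then have m: "(j,\<not>b) \<in> {x\<in>cls!i. a (fst x) \<noteq> snd x}" using nb by simp
    have "v = (\<lambda>(j,b). Vlit j (\<not>b)) (j,\<not>b)" using v by simp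
    then show ?thesis using m by (intro UnI2) (erule ssubst, rule imageI)
  qed
qed


lemma wr_Ssub: assumes sV: "Ssub i j b k t p \<in> Gphi_verts r n cls"
  shows "wreach r (Gphi_verts r n cls) (Gphi_edge r n cls) (ordf a B) (Ssub i j b k t p) \<subseteq>
    ((\<lambda>p'. Ssub i j b k t p') ` {1..r-2} - {Ssub i j b k t p}) \<union> {Ucl i k, Vlit j (\<not>b)}
     \<union> (\<lambda>(j,b). Vlit j b) ` (cls!i)"
proof
  have jb: "(j,b) \<in> cls!i" using sV unfolding Gphi_verts_def by auto
  fix v assume "v \<in> wreach r (Gphi_verts r n cls) (Gphi_edge r n cls) (ordf a B) (Ssub i j b k t p)"
  then obtain P m where P: "length P = Suc m" "m \<le> r" "P!0 = Ssub i j b k t p" "P!m = v"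
    "\<forall>c<m. Gphi_edge r n cls (P!c) (P!Suc c)" "\<forall>c\<le>m. P!c \<in> Gphi_verts r n cls"
    "\<forall>c\<le>m. P!c \<noteq> Ssub i j b k t p \<and> P!c \<noteq> v \<longrightarrow> ordf a B (P!c) < ordf a B v"
    "v \<in> Gphi_verts r n cls" "v \<noteq> Ssub i j b k t p" "ordf a B (Ssub i j b k t p) < ordf a B v"
    by (rule wreach_E)
  show "v \<in> ((\<lambda>p'. Ssub i j b k t p') ` {1..r-2} - {Ssub i j b k t p}) \<union> {Ucl i k, Vlit j (\<not>b)}
     \<union> (\<lambda>(j,b). Vlit j b) ` (cls!i)"
  proof (cases "\<forall>c\<le>m. is_ss (P!c)")
    case True
    have "\<exists>p'. P!m = Ssub i j b k t p'"
      by (rule seg_walk[where q="Suc m" and m=m]) (use P True in auto)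
    then obtain p' where vp: "v = Ssub i j b k t p'" using P(4) by auto
    have "p' \<in> {1..r-2}" using P(8) unfolding vp Gphi_verts_def by auto
    then show ?thesis using vp P(9) by auto
  next
    case False
    then have "\<exists>c. \<not> is_ss (P!c) \<and> c \<le> m" by auto
    then obtain q where q: "\<not> is_ss (P!q) \<and> q \<le> m" "\<forall>q'<q. \<not> (\<not> is_ss (P!q') \<and> q' \<le> m)"
      using exists_least_iff[of "\<lambda>c. \<not> is_ss (P!c) \<and> c \<le> m"] by blast
    have pre: "\<forall>q'<q. is_ss (P!q')" using q by auto
    have "is_ss (P!0)" using P(3) by (simp add: is_ss_def)
    then have q0: "q \<noteq> 0" using q by metis
    have "\<exists>p'. P!(q-1) = Ssub i j b k t p'"
      by (rule seg_walk[where q=q and m=m]) (use P pre q q0 in auto)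
    then obtain p' where pq: "P!(q-1) = Ssub i j b k t p'" by blast
    have qq: "q - 1 < m" "Suc (q-1) = q" using q q0 by auto
    have "Gphi_edge r n cls (P!(q-1)) (P!Suc (q-1))" using P(5) qq(1) by blast
    then have "Gphi_edge r n cls (Ssub i j b k t p') (P!q)" using pq qq(2) by simp
    then have pq2: "P!q = Vlit j b \<or> P!q = Ucl i k" using nb_Ssub q by blast
    have vC: "Vlit j b \<in> (\<lambda>(j,b). Vlit j b) ` (cls!i)"
      by (rule image_eqI[where x="(j,b)"]) (simp_all add: jb)
    show ?thesis
    proof (cases "P!q = v")
      case True then show ?thesis using pq2 vC by auto
    next
      case False
      have qm: "q < m" using False q P(4) by (cases "q = m") auto
      have nq: "P!q \<noteq> Ssub i j b k t p" using q by (auto simp: is_ss_def)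
      have "ordf a B (P!q) < ordf a B v" using P(7) q nq False by blast
      moreover have "P!q \<in> Gphi_verts r n cls" using P(6) q by blast
      ultimately have lq: "lev a (P!q) \<le> lev a v" using lev_le P(8) by blast
      from pq2 show ?thesis
      proof
        assume Vq: "P!q = Vlit j b"
        have "\<exists>j' b'. v = Vlit j' b'" using lq Vq by (cases v) (auto simp: lev_def split: if_splits)
        then obtain j' b' where vv: "v = Vlit j' b'" by blast
        show ?thesis
        proof (cases "j' = j")
          case True then show ?thesis using vv vC by (cases "b' = b") auto
        next
          case False
          have l: "\<bar>dv r cls j (P!m) - dv r cls j (P!q)\<bar> \<le> int (m - q)"
            by (rule lip_walk[where E="Gphi_edge r n cls" and m=m]) (use dv_lip r3 P qm in auto)
          have "dv r cls j (P!m) = 2 * int r - 2" "dv r cls j (P!q) = 0"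
            using vv Vq P(4) False by (auto simp: dv_def)
          then show ?thesis using l qm q0 P(2) r3 by simp
        qed
      next
        assume Uq: "P!q = Ucl i k"
        have l: "\<bar>gk r cls i k (P!m) - gk r cls i k (P!q)\<bar> \<le> int (m - q)"
          by (rule lip_walk[where E="Gphi_edge r n cls" and m=m]) (use gk_lip r3 P qm in auto)
        have g0: "gk r cls i k (P!q) = 0" using Uq by (simp add: gk_def)
        have gv: "gk r cls i k v \<le> int r - 1" using l g0 P(4) P(2) qm q0 by simp
        show ?thesis
        proof (cases v)
          case (Ucl i' k')
          then have "gk r cls i k v = int r + 1" using False Uq by (auto simp: gk_def)
          then show ?thesis using gv by simp
        next
          case (Ssub i' j' b' k' t' p'')
          then show ?thesis using lq Uq by (simp add: lev_def)
        next
          case (Vlit j' b')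
          have "(j',b') \<in> cls!i"
          proof (rule ccontr)
            assume "(j',b') \<notin> cls!i"
            then have "gk r cls i k v \<ge> int r" using Vlit by (simp add: gk_def)
            then show False using gv by simp
          qed
          moreover have "v = (\<lambda>(j,b). Vlit j b) (j',b')" using Vlit by simp
          ultimately show ?thesis by (intro UnI2) (erule ssubst, rule imageI)
        qed
      qed
    qed
  qed
qed

end

lemma cls_fin: assumes "exact_rSAT_instance r n cls" "i < length cls" "r \<ge> 3"
  shows "finite (cls!i)" "card (cls!i) = r" "fst ` (cls!i) \<subseteq> {..<n}"
proof -
  have "cls!i \<in> set cls" using assms by simp
  then have c: "card (cls!i) = r" "fst ` (cls!i) \<subseteq> {..<n}" using assms(1) unfolding exact_rSAT_instance_def by auto
  then show "card (cls!i) = r" "fst ` (cls!i) \<subseteq> {..<n}" by auto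
  show "finite (cls!i)" using c assms(3) by (intro card_ge_0_finite) auto
qed

lemma card_Ucl_set: assumes "finite C" "card C = r" "\<exists>(j,b)\<in>C. a j = b"
  shows "card ((\<lambda>(j,b). Vlit j b) ` C \<union> (\<lambda>(j,b). Vlit j (\<not>b)) ` {x\<in>C. a (fst x) \<noteq> snd x}) \<le> 2*r - 1"
proof -
  obtain j b where jb: "(j,b) \<in> C" "a j = b" using assms(3) by blast
  have "(j,b) \<notin> {x\<in>C. a (fst x) \<noteq> snd x}" using jb by simp
  then have "{x\<in>C. a (fst x) \<noteq> snd x} \<noteq> C" using jb(1) by blast
  then have "{x\<in>C. a (fst x) \<noteq> snd x} \<subset> C" by blast
  then have c2: "card {x\<in>C. a (fst x) \<noteq> snd x} < r" using assms(1,2) psubset_card_mono by metis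
  have "card ((\<lambda>(j,b). Vlit j b) ` C \<union> (\<lambda>(j,b). Vlit j (\<not>b)) ` {x\<in>C. a (fst x) \<noteq> snd x})
     \<le> card ((\<lambda>(j,b). Vlit j b) ` C) + card ((\<lambda>(j,b). Vlit j (\<not>b)) ` {x\<in>C. a (fst x) \<noteq> snd x})"
    by (rule card_Un_le)
  also have "\<dots> \<le> card C + card {x\<in>C. a (fst x) \<noteq> snd x}"
    by (intro add_mono card_image_le) (use assms(1) in auto)
  finally show ?thesis using c2 assms(2) by linarith
qed

lemma card_Ssub_set: assumes "finite C" "card C = r" "r \<ge> 3" "p \<in> {1..r-2}"
  shows "card (((\<lambda>p'. Ssub i j b k t p') ` {1..r-2} - {Ssub i j b k t p}) \<union> {Ucl i k, Vlit j (\<not>b)}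
     \<union> (\<lambda>(j,b). Vlit j b) ` C) \<le> 2*r - 1"
proof -
  let ?A = "(\<lambda>p'. Ssub i j b k t p') ` {1..r-2}"
  have fA: "finite ?A" by simp
  have cA: "card ?A \<le> r - 2" using card_image_le[of "{1..r-2}" "\<lambda>p'. Ssub i j b k t p'"] by simp
  have sA: "Ssub i j b k t p \<in> ?A" using assms(4) by simp
  have c1: "card (?A - {Ssub i j b k t p}) \<le> r - 3" using card_Diff_singleton[OF sA] cA by simp
  have c2: "card {Ucl i k, Vlit j (\<not>b)} \<le> 2" by (simp add: card_insert_le_m1)
  have c3: "card ((\<lambda>(j,b). Vlit j b) ` C) \<le> r" using card_image_le[OF assms(1)] assms(2) by metis
  have "card ((?A - {Ssub i j b k t p}) \<union> {Ucl i k, Vlit j (\<not>b)} \<union> (\<lambda>(j,b). Vlit j b) ` C)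
      \<le> card ((?A - {Ssub i j b k t p}) \<union> {Ucl i k, Vlit j (\<not>b)}) + card ((\<lambda>(j,b). Vlit j b) ` C)"
    by (rule card_Un_le)
  also have "\<dots> \<le> card (?A - {Ssub i j b k t p}) + card {Ucl i k, Vlit j (\<not>b)} + card ((\<lambda>(j,b). Vlit j b) ` C)"
    using card_Un_le by (metis add_le_mono1)
  finally show ?thesis using c1 c2 c3 assms(3) by linarith
qed

lemma finite_V: assumes "exact_rSAT_instance r n cls" "r \<ge> 3"
  shows "finite (Gphi_verts r n cls)"
proof -
  let ?L = "length cls"
  have "Gphi_verts r n cls \<subseteq> (\<lambda>(i,k). Ucl i k) ` ({..<?L} \<times> {..<2*r}) \<union> (\<lambda>(j,b). Vlit j b) ` ({..<n} \<times> UNIV)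
     \<union> (\<lambda>(i,j,b,k,t,p). Ssub i j b k t p) ` ({..<?L} \<times> {..<n} \<times> UNIV \<times> {..<2*r} \<times> {..<2} \<times> {..r})"
  proof
    fix x assume "x \<in> Gphi_verts r n cls"
    then consider (U) i k where "x = Ucl i k" "i < ?L" "k < 2*r" | (V) j b where "x = Vlit j b" "j < n"
      | (S) i j b k t p where "x = Ssub i j b k t p" "i < ?L" "(j,b) \<in> cls!i" "k < 2*r" "t < 2" "p \<le> r - 2"
      unfolding Gphi_verts_def by blast
    then show "x \<in> (\<lambda>(i,k). Ucl i k) ` ({..<?L} \<times> {..<2*r}) \<union> (\<lambda>(j,b). Vlit j b) ` ({..<n} \<times> UNIV)
     \<union> (\<lambda>(i,j,b,k,t,p). Ssub i j b k t p) ` ({..<?L} \<times> {..<n} \<times> UNIV \<times> {..<2*r} \<times> {..<2} \<times> {..r})"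
    proof cases
      case U then show ?thesis by (intro UnI1) (rule image_eqI[where x="(i,k)"], auto)
    next
      case V then show ?thesis by (intro UnI1 UnI2) (rule image_eqI[where x="(j,b)"], auto)
    next
      case S
      have "j < n" using cls_fin(3)[OF assms(1) S(2) assms(2)] S(3) by force
      then show ?thesis using S by (intro UnI2) (rule image_eqI[where x="(i,j,b,k,t,p)"], auto)
    qed
  qed
  moreover have "finite ((\<lambda>(i,k). Ucl i k) ` ({..<?L} \<times> {..<2*r}) \<union> (\<lambda>(j,b). Vlit j b) ` ({..<n} \<times> (UNIV::bool set))
     \<union> (\<lambda>(i,j,b,k,t,p). Ssub i j b k t p) ` ({..<?L} \<times> {..<n} \<times> (UNIV::bool set) \<times> {..<2*r} \<times> {..<2} \<times> {..r}))"
    by (intro finite_UnI finite_imageI finite_cartesian_product) auto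
  ultimately show ?thesis by (rule finite_subset)
qed

theorem lemma3p8:
  fixes r n :: nat and cls :: "clause list"
  assumes "r \<ge> 3"
    and "exact_rSAT_instance r n cls"
    and "satisfiable cls"
  shows "wcol r (Gphi_verts r n cls) (Gphi_edge r n cls) \<le> 2 * r - 1"
proof -
  let ?V = "Gphi_verts r n cls"
  obtain a where sat: "\<forall>C \<in> set cls. \<exists>(j,b)\<in>C. a j = b" using assms(3) unfolding satisfiable_def by blast
  have fV: "finite ?V" using finite_V assms by blast
  define B where "B = Suc (Max (to_nat ` ?V))"
  have Bb: "\<forall>x \<in> ?V. to_nat x < B"
  proof
    fix x assume "x \<in> ?V"
    then have "to_nat x \<le> Max (to_nat ` ?V)" using fV by (intro Max_ge) auto
    then show "to_nat x < B" unfolding B_def by simp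
  qed
  have inj: "inj_on (ordf a B) ?V" using ordf_inj Bb unfolding inj_on_def by blast
  have bound: "card (wreach r ?V (Gphi_edge r n cls) (ordf a B) u) \<le> 2 * r - 1" if uV: "u \<in> ?V" for u
  proof (cases u)
    case (Ucl i k)
    then have i: "i < length cls" using uV unfolding Gphi_verts_def by auto
    note cf = cls_fin[OF assms(2) i assms(1)]
    let ?S = "(\<lambda>(j,b). Vlit j b) ` (cls!i) \<union> (\<lambda>(j,b). Vlit j (\<not>b)) ` {x\<in>cls!i. a (fst x) \<noteq> snd x}"
    have "\<exists>(j,b)\<in>cls!i. a j = b" using sat i by simp
    then have c: "card ?S \<le> 2*r - 1" by (rule card_Ucl_set[OF cf(1) cf(2)])
    have f: "finite ?S" using cf(1) by simp
    have sub: "wreach r ?V (Gphi_edge r n cls) (ordf a B) u \<subseteq> ?S"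
      using wr_Ucl[OF assms(1) assms(2) sat Bb i, of k] Ucl by simp
    show ?thesis using card_mono[OF f sub] c by linarith
  next
    case (Vlit j b)
    have "card (wreach r ?V (Gphi_edge r n cls) (ordf a B) u) \<le> card {Vlit j (\<not>b)}"
      using wr_Vlit[OF assms(1) assms(2) sat Bb, of j b] Vlit by (intro card_mono) auto
    then show ?thesis using assms(1) by simp
  next
    case (Ssub i j b k t p)
    then have i: "i < length cls" and p: "p \<in> {1..r-2}" using uV unfolding Gphi_verts_def by auto
    note cf = cls_fin[OF assms(2) i assms(1)]
    let ?S = "((\<lambda>p'. Ssub i j b k t p') ` {1..r-2} - {Ssub i j b k t p}) \<union> {Ucl i k, Vlit j (\<not>b)}
     \<union> (\<lambda>(j,b). Vlit j b) ` (cls!i)"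
    have c: "card ?S \<le> 2*r - 1" by (rule card_Ssub_set[OF cf(1) cf(2) assms(1) p])
    have f: "finite ?S" using cf(1) by simp
    have sV: "Ssub i j b k t p \<in> ?V" using uV Ssub by simp
    have sub: "wreach r ?V (Gphi_edge r n cls) (ordf a B) u \<subseteq> ?S"
      using wr_Ssub[OF assms(1) assms(2) sat Bb sV] Ssub by simp
    show ?thesis using card_mono[OF f sub] c by linarith
  qed
  show ?thesis unfolding wcol_def
    by (rule Least_le, rule exI[of _ "ordf a B"]) (use inj bound in blast)
qed

end
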